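(* Let $D$ be an open subset of an $n$-dimensional Riemannian manifold, $\{e_1,\dots,e_n\}$ a smooth orthonormal frame on $D$ with dual coframe $\{\theta_i\}$, and $\mathfrak a$ a smooth symmetric Codazzi $(0,2)$-tensor on $D$ with $\mathfrak a(e_i,e_j)=\lambda_i\delta_{ij}$, where $\lambda_1,\dots,\lambda_n$ are pointwise distinct on $D$. Let $X=\sum_{i=1}^n\nabla_{e_i}e_i$, $\Gamma_{ij}^k=\langle\nabla_{e_i}e_j,e_k\rangle$, $\sigma_k=\sigma_k(\lambda_1,\dots,\lambda_n)$ and $P(x)=\prod_{i=1}^n(x-\lambda_i)$. If $\sigma_k$ is constant on $D$ for every $k\neq n$, then (i) $\Gamma_{ii}^k=c_{ik}(\sigma_n)_k$ for all $i\neq k$; (ii) $\langle X,\nabla\sigma_n\rangle=\sum_{k=1}^n v_k(\sigma_n)_k^2$, where $c_{ik}=\dfrac{(-1)^{n+1}}{(\lambda_i-\lambda_k)P'(\lambda_i)}$ for $i\neq k$, $v_k=(-1)^{n+1}\dfrac{P''(\lambda_k)}{2P'(\lambda_k)^2}$, and $d\sigma_n=\sum_k(\sigma_n)_k\theta_k$ (so $\nabla\sigma_n=\sum_k(\sigma_n)_ke_k$).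
   Context: $\mathfrak a$ is Codazzi if $(\nabla_X\mathfrak a)(Y,Z)=(\nabla_Y\mathfrak a)(X,Z)$ for all vector fields $X,Y,Z$. $\nabla$ is the Levi-Civita connection. *)

theory Defs
  imports "HOL-Analysis.Analysis" "HOL-Computational_Algebra.Polynomial"
begin

text \<open>Local model: the open set D of the Riemannian manifold is taken inside a
coordinate chart, i.e. D is an open subset of R^n (type real^'n, n = CARD('n)),
and the Riemannian metric is a smooth field of symmetric positive definite
matrices g.\<close>

fun dder :: "'a::real_normed_vector list \<Rightarrow> ('a \<Rightarrow> 'b::real_normed_vector) \<Rightarrow> 'a \<Rightarrow> 'b" where
  "dder [] f = f"
| "dder (v # vs) f = (\<lambda>p. frechet_derivative (dder vs f) (at p) v)"

definition smooth_on :: "'a::real_normed_vector set \<Rightarrow> ('a \<Rightarrow> 'b::real_normed_vector) \<Rightarrow> bool" where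
  "smooth_on S f \<longleftrightarrow> (\<forall>vs. dder vs f differentiable_on S \<and> continuous_on S (dder vs f))"

definition riemannian_metric :: "(real^'n) set \<Rightarrow> (real^'n \<Rightarrow> real^'n^'n) \<Rightarrow> bool" where
  "riemannian_metric D g \<longleftrightarrow> smooth_on D g \<and>
     (\<forall>p\<in>D. transpose (g p) = g p \<and> (\<forall>v. v \<noteq> 0 \<longrightarrow> v \<bullet> (g p *v v) > 0))"

definition ginner :: "(real^'n \<Rightarrow> real^'n^'n) \<Rightarrow> real^'n \<Rightarrow> real^'n \<Rightarrow> real^'n \<Rightarrow> real" where
  "ginner g p u v = u \<bullet> (g p *v v)"

definition christoffel :: "(real^'n \<Rightarrow> real^'n^'n) \<Rightarrow> real^'n \<Rightarrow> real^'n \<Rightarrow> real^'n \<Rightarrow> real^'n" where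
  "christoffel g p u v =
     (1/2) *\<^sub>R (matrix_inv (g p) *v
       (\<chi> l. v \<bullet> (frechet_derivative g (at p) u *v axis l 1)
            + u \<bullet> (frechet_derivative g (at p) v *v axis l 1)
            - u \<bullet> (frechet_derivative g (at p) (axis l 1) *v v)))"

definition cov :: "(real^'n \<Rightarrow> real^'n^'n) \<Rightarrow> (real^'n \<Rightarrow> real^'n) \<Rightarrow> (real^'n \<Rightarrow> real^'n) \<Rightarrow> real^'n \<Rightarrow> real^'n" where
  "cov g X Y p = frechet_derivative Y (at p) (X p) + christoffel g p (X p) (Y p)"

definition tens :: "(real^'n \<Rightarrow> real^'n^'n) \<Rightarrow> (real^'n \<Rightarrow> real^'n) \<Rightarrow> (real^'n \<Rightarrow> real^'n) \<Rightarrow> real^'n \<Rightarrow> real" where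
  "tens a Y Z p = Y p \<bullet> (a p *v Z p)"

definition cov_tens :: "(real^'n \<Rightarrow> real^'n^'n) \<Rightarrow> (real^'n \<Rightarrow> real^'n^'n) \<Rightarrow> (real^'n \<Rightarrow> real^'n)
     \<Rightarrow> (real^'n \<Rightarrow> real^'n) \<Rightarrow> (real^'n \<Rightarrow> real^'n) \<Rightarrow> real^'n \<Rightarrow> real" where
  "cov_tens g a X Y Z p = frechet_derivative (tens a Y Z) (at p) (X p)
      - tens a (cov g X Y) Z p - tens a Y (cov g X Z) p"

definition codazzi :: "(real^'n) set \<Rightarrow> (real^'n \<Rightarrow> real^'n^'n) \<Rightarrow> (real^'n \<Rightarrow> real^'n^'n) \<Rightarrow> bool" where
  "codazzi D g a \<longleftrightarrow> (\<forall>X Y Z. smooth_on D X \<and> smooth_on D Y \<and> smooth_on D Z \<longrightarrow>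
      (\<forall>p\<in>D. cov_tens g a X Y Z p = cov_tens g a Y X Z p))"

definition esym :: "nat \<Rightarrow> ('n::finite \<Rightarrow> real) \<Rightarrow> real" where
  "esym k lam = (\<Sum>S\<in>{S. card S = k}. \<Prod>i\<in>S. lam i)"

definition charpoly :: "('n::finite \<Rightarrow> real) \<Rightarrow> real poly" where
  "charpoly lam = (\<Prod>i\<in>UNIV. [:- lam i, 1:])"

end

theory Submission
  imports Defs
begin

lemma vieta:
  fixes lam :: "'n::finite \<Rightarrow> real"
  shows "(\<Prod>j\<in>UNIV. x - lam j) = (\<Sum>k\<le>CARD('n). (-1)^k * esym k lam * x^(CARD('n) - k))"
proof -
  have "(\<Prod>j\<in>UNIV. x - lam j) = (\<Prod>j\<in>UNIV. (- lam j) + x)" by simp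
  also have "\<dots> = (\<Sum>X\<in>Pow UNIV. prod (\<lambda>j. - lam j) X * prod (\<lambda>_. x) (UNIV - X))"
    by (rule prod_add) simp
  also have "\<dots> = (\<Sum>X\<in>Pow UNIV. (-1)^card X * prod lam X * x^(CARD('n) - card X))"
  proof (rule sum.cong[OF refl])
    fix X :: "'n set" assume "X \<in> Pow UNIV"
    have "prod (\<lambda>j. - lam j) X = (-1)^card X * prod lam X"
      by (simp add: prod_uminus)
    moreover have "card (UNIV - X) = CARD('n) - card X"
      by (simp add: card_Diff_subset)
    ultimately show "prod (\<lambda>j. - lam j) X * prod (\<lambda>_. x) (UNIV - X) = (-1)^card X * prod lam X * x^(CARD('n) - card X)"
      by simp
  qed
  also have "\<dots> = (\<Sum>k\<le>CARD('n). sum (\<lambda>X. (-1)^card X * prod lam X * x^(CARD('n) - card X)) {X \<in> Pow UNIV. card X = k})"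
    by (rule sum.group[symmetric]) (auto simp: card_mono)
  also have "\<dots> = (\<Sum>k\<le>CARD('n). (-1)^k * esym k lam * x^(CARD('n) - k))"
  proof (rule sum.cong[OF refl])
    fix k assume "k \<in> {..CARD('n)}"
    have "sum (\<lambda>X. (-1)^card X * prod lam X * x^(CARD('n) - card X)) {X \<in> Pow UNIV. card X = k}
       = sum (\<lambda>X. (-1)^k * x^(CARD('n) - k) * prod lam X) {X. card X = k}"
      by (rule sum.cong) auto
    also have "\<dots> = (-1)^k * esym k lam * x^(CARD('n) - k)"
      by (simp add: esym_def sum_distrib_left mult_ac)
    finally show "sum (\<lambda>X. (-1)^card X * prod lam X * x^(CARD('n) - card X)) {X \<in> Pow UNIV. card X = k} = (-1)^k * esym k lam * x^(CARD('n) - k)" .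
  qed
  finally show ?thesis .
qed

lemma pderiv_charpoly_at:
  fixes lam :: "'n::finite \<Rightarrow> real"
  shows "poly (pderiv (charpoly lam)) (lam i) = (\<Prod>l\<in>UNIV-{i}. lam i - lam l)"
proof -
  have "poly (pderiv (charpoly lam)) (lam i) = (\<Sum>a\<in>UNIV. \<Prod>l\<in>UNIV-{a}. lam i - lam l)"
    by (simp add: charpoly_def pderiv_prod poly_sum poly_prod pderiv_pCons)
  also have "\<dots> = (\<Prod>l\<in>UNIV-{i}. lam i - lam l)"
  proof -
    have "(\<Sum>a\<in>UNIV-{i}. \<Prod>l\<in>UNIV-{a}. lam i - lam l) = 0"
      by (rule sum.neutral) (auto intro: prod_zero)
    then show ?thesis by (simp add: sum.remove[of UNIV i])
  qed
  finally show ?thesis .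
qed
lemma lagrange_one:
  fixes r :: "'a \<Rightarrow> real"
  assumes fin: "finite R" and ne: "R \<noteq> {}" and inj: "inj_on r R"
  shows "(\<Sum>i\<in>R. (\<Prod>l\<in>R-{i}. x - r l) / (\<Prod>l\<in>R-{i}. r i - r l)) = 1"
proof -
  define H where "H = (\<Sum>i\<in>R. smult (1 / (\<Prod>l\<in>R-{i}. r i - r l)) (\<Prod>l\<in>R-{i}. [:- r l, 1:])) - 1"
  have polyH: "poly H y = (\<Sum>i\<in>R. (\<Prod>l\<in>R-{i}. y - r l) / (\<Prod>l\<in>R-{i}. r i - r l)) - 1" for y
    by (simp add: H_def poly_sum poly_prod)
  have cR: "card R > 0" using fin ne by (simp add: card_gt_0_iff)
  have dterm: "degree (smult (1 / (\<Prod>l\<in>R-{i}. r i - r l)) (\<Prod>l\<in>R-{i}. [:- r l, 1:])) \<le> card R - 1" if "i \<in> R" for i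
  proof -
    have "degree (\<Prod>l\<in>R-{i}. [:- r l, 1:]) \<le> (\<Sum>l\<in>R-{i}. degree [:- r l, 1::real:])"
      using degree_prod_sum_le[of "R-{i}" "\<lambda>l. [:- r l, 1:]"] fin by (simp add: o_def)
    also have "\<dots> = card R - 1" using that fin by simp
    finally show ?thesis using degree_smult_le order_trans by blast
  qed
  have "degree (\<Sum>i\<in>R. smult (1 / (\<Prod>l\<in>R-{i}. r i - r l)) (\<Prod>l\<in>R-{i}. [:- r l, 1:])) \<le> card R - 1"
    by (rule degree_sum_le) (use fin dterm in auto)
  then have degH: "degree H < card R"
    unfolding H_def using degree_diff_le[of _ "card R - 1" 1] cR by fastforce
  have roots: "poly H (r j) = 0" if "j \<in> R" for j
  proof -
    have "(\<Sum>i\<in>R. (\<Prod>l\<in>R-{i}. r j - r l) / (\<Prod>l\<in>R-{i}. r i - r l))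
        = (\<Prod>l\<in>R-{j}. r j - r l) / (\<Prod>l\<in>R-{j}. r j - r l)
          + (\<Sum>i\<in>R-{j}. (\<Prod>l\<in>R-{i}. r j - r l) / (\<Prod>l\<in>R-{i}. r i - r l))"
      using fin that by (simp add: sum.remove)
    also have "(\<Sum>i\<in>R-{j}. (\<Prod>l\<in>R-{i}. r j - r l) / (\<Prod>l\<in>R-{i}. r i - r l)) = 0"
    proof (rule sum.neutral, rule ballI)
      fix i assume "i \<in> R - {j}"
      then have "i \<in> R" "i \<noteq> j" by auto
      have "(\<Prod>l\<in>R-{i}. r j - r l) = 0"
        by (rule prod_zero) (use fin \<open>i \<in> R\<close> \<open>i \<noteq> j\<close> \<open>j \<in> R\<close> in auto)
      then show "(\<Prod>l\<in>R-{i}. r j - r l) / (\<Prod>l\<in>R-{i}. r i - r l) = 0" by (simp only: div_0)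
    qed
    also have "(\<Prod>l\<in>R-{j}. r j - r l) \<noteq> 0"
      using fin inj that by (auto simp: prod_zero_iff inj_on_def)
    ultimately show ?thesis by (simp add: polyH)
  qed
  have "H = 0"
  proof (rule ccontr)
    assume "H \<noteq> 0"
    have "card (r ` R) \<le> card {x. poly H x = 0}"
      by (rule card_mono) (use poly_roots_finite[OF \<open>H \<noteq> 0\<close>] roots in auto)
    also have "\<dots> \<le> degree H" by (rule card_poly_roots_bound[OF \<open>H \<noteq> 0\<close>])
    finally show False using degH card_image[OF inj] by simp
  qed
  then have "poly H x = 0" by simp
  then show ?thesis by (simp add: polyH)
qed
lemma pf_deriv:
  fixes r :: "'a \<Rightarrow> real"
  assumes fin: "finite R" and inj: "inj_on r R" and c: "c \<notin> r ` R"
  shows "(\<Sum>i\<in>R. 1 / ((r i - c)^2 * (\<Prod>l\<in>R-{i}. r i - r l)))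
       = poly (pderiv (\<Prod>l\<in>R. [:- r l, 1:])) c / (poly (\<Prod>l\<in>R. [:- r l, 1:]) c)^2"
proof (cases "R = {}")
  case True then show ?thesis by simp
next
  case ne: False
  define Q where "Q = (\<Prod>l\<in>R. [:- r l, 1:])"
  define w where "w i = (\<Prod>l\<in>R-{i}. r i - r l)" for i
  define S where "S = - (r ` R)"
  have S: "open S" "c \<in> S" using fin c by (auto simp: S_def intro!: open_Compl finite_imp_closed)
  have polyQ: "poly Q y = (\<Prod>l\<in>R. y - r l)" for y by (simp add: Q_def poly_prod)
  have Qne: "poly Q y \<noteq> 0" if "y \<in> S" for y
    using that fin by (auto simp: polyQ S_def prod_zero_iff)
  have eq: "inverse (poly Q y) = (\<Sum>i\<in>R. inverse (w i) * inverse (y - r i))" if "y \<in> S" for y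
  proof -
    have yi: "y - r i \<noteq> 0" if "i \<in> R" for i using \<open>y \<in> S\<close> that by (auto simp: S_def)
    have rem: "(\<Prod>l\<in>R-{i}. y - r l) = poly Q y * inverse (y - r i)" if "i \<in> R" for i
      using fin that yi[OF that] by (simp add: polyQ prod.remove field_simps)
    have "1 = (\<Sum>i\<in>R. (\<Prod>l\<in>R-{i}. y - r l) / w i)"
      using lagrange_one[OF fin ne inj, of y] by (simp add: w_def)
    also have "\<dots> = poly Q y * (\<Sum>i\<in>R. inverse (w i) * inverse (y - r i))"
      by (simp add: sum_distrib_left rem divide_inverse mult_ac cong: sum.cong)
    finally show ?thesis using Qne[OF that] by (simp add: field_simps)
  qed
  have d1: "((\<lambda>y. inverse (poly Q y)) has_field_derivative - (poly (pderiv Q) c * inverse (poly Q c ^ 2))) (at c)"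
    using DERIV_inverse_fun[OF poly_DERIV[of Q c] Qne[OF S(2)]] by (simp add: power2_eq_square)
  have d2: "((\<lambda>y. \<Sum>i\<in>R. inverse (w i) * inverse (y - r i)) has_field_derivative
       (\<Sum>i\<in>R. inverse (w i) * (- inverse ((c - r i)^2)))) (at c)"
  proof (rule DERIV_sum, rule DERIV_cmult)
    fix i assume "i \<in> R"
    then have "c - r i \<noteq> 0" using c by auto
    show "((\<lambda>y. inverse (y - r i)) has_field_derivative - inverse ((c - r i)^2)) (at c)"
      using DERIV_inverse_fun[OF DERIV_diff[OF DERIV_ident DERIV_const] \<open>c - r i \<noteq> 0\<close>]
      by (simp add: power2_eq_square)
  qed
  have d1': "((\<lambda>y. \<Sum>i\<in>R. inverse (w i) * inverse (y - r i)) has_field_derivative - (poly (pderiv Q) c * inverse (poly Q c ^ 2))) (at c)"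
    using d1 S eq unfolding has_field_derivative_def
    by (rule has_derivative_transform_within_open) auto
  have "(\<Sum>i\<in>R. inverse (w i) * (- inverse ((c - r i)^2))) = - (poly (pderiv Q) c * inverse (poly Q c ^ 2))"
    by (rule DERIV_unique[OF d2 d1'])
  then have "(\<Sum>i\<in>R. inverse (w i) * inverse ((c - r i)^2)) = poly (pderiv Q) c * inverse (poly Q c ^ 2)"
    by (simp add: sum_negf)
  moreover have "(r i - c)^2 = (c - r i)^2" for i by (simp add: power2_commute)
  ultimately show ?thesis
    by (simp add: Q_def w_def divide_inverse mult_ac)
qed
lemma pf_charpoly:
  fixes lam :: "'n::finite \<Rightarrow> real"
  assumes inj: "inj lam"
  shows "(\<Sum>i\<in>UNIV-{k}. 1 / ((lam i - lam k) * poly (pderiv (charpoly lam)) (lam i)))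
    = poly (pderiv (pderiv (charpoly lam))) (lam k) / (2 * (poly (pderiv (charpoly lam)) (lam k))^2)"
proof -
  define R where "R = UNIV - {k}"
  define Q where "Q = (\<Prod>l\<in>R. [:- lam l, 1:])"
  have P: "charpoly lam = [:- lam k, 1:] * Q"
    unfolding charpoly_def Q_def R_def by (simp add: prod.remove[of UNIV k])
  have l: "pderiv [:- lam k, 1::real:] = 1" by (simp add: pderiv_pCons)
  have dP: "pderiv (charpoly lam) = Q + [:- lam k, 1:] * pderiv Q"
    unfolding P pderiv_mult l by (simp only: mult_1_right mult_1_left add.commute)
  have ddP: "pderiv (pderiv (charpoly lam)) = 2 * pderiv Q + [:- lam k, 1:] * pderiv (pderiv Q)"
    unfolding dP pderiv_add pderiv_mult l by (simp only: mult_1_right mult_1_left mult_2 add_ac)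
  have t: "1 / ((lam i - lam k) * poly (pderiv (charpoly lam)) (lam i))
      = 1 / ((lam i - lam k)^2 * (\<Prod>l\<in>R-{i}. lam i - lam l))" if "i \<in> R" for i
  proof -
    have "poly (pderiv (charpoly lam)) (lam i) = (\<Prod>l\<in>UNIV-{i}. lam i - lam l)"
      by (rule pderiv_charpoly_at)
    also have "\<dots> = (lam i - lam k) * (\<Prod>l\<in>R-{i}. lam i - lam l)"
    proof -
      have ki: "k \<in> UNIV - {i}" using that by (auto simp: R_def)
      have se: "UNIV - {i} - {k} = R - {i}" by (auto simp: R_def)
      show ?thesis using prod.remove[OF _ ki, of "\<lambda>l. lam i - lam l"] by (simp only: se finite)
    qed
    finally show ?thesis by (simp add: power2_eq_square mult_ac)
  qed
  have "(\<Sum>i\<in>UNIV-{k}. 1 / ((lam i - lam k) * poly (pderiv (charpoly lam)) (lam i)))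
      = (\<Sum>i\<in>R. 1 / ((lam i - lam k)^2 * (\<Prod>l\<in>R-{i}. lam i - lam l)))"
    unfolding R_def[symmetric] by (rule sum.cong[OF refl]) (rule t)
  also have "\<dots> = poly (pderiv Q) (lam k) / (poly Q (lam k))^2"
    unfolding Q_def
    by (rule pf_deriv) (use inj in \<open>auto simp: R_def inj_on_def inj_def\<close>)
  also have "\<dots> = poly (pderiv (pderiv (charpoly lam))) (lam k) / (2 * (poly (pderiv (charpoly lam)) (lam k))^2)"
  proof -
    have e1: "poly (pderiv (charpoly lam)) (lam k) = poly Q (lam k)" unfolding dP by simp
    have e2: "poly (pderiv (pderiv (charpoly lam))) (lam k) = 2 * poly (pderiv Q) (lam k)"
      unfolding ddP by simp
    show ?thesis unfolding e1 e2 by simp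
  qed
  finally show ?thesis .
qed
lemma bb_mv: "bounded_bilinear (\<lambda>(M::real^'n^'m) (z::real^'n). M *v z)"
  unfolding bilinear_conv_bounded_bilinear[symmetric] bilinear_def
proof (intro allI conjI)
  fix z :: "real^'n" and M :: "real^'n^'m"
  show "linear (\<lambda>M::real^'n^'m. M *v z)"
    by (rule linearI) (simp_all add: vec_eq_iff matrix_vector_mult_def sum_distrib_left sum.distrib algebra_simps)
  show "linear (\<lambda>z. M *v z)" by (rule matrix_vector_mul_linear)
qed

lemma deriv_form:
  fixes Y Z :: "'a::real_normed_vector \<Rightarrow> real^'n" and M :: "'a \<Rightarrow> real^'n^'n"
  assumes Y: "(Y has_derivative Y') (at p)" and M: "(M has_derivative M') (at p)"
    and Z: "(Z has_derivative Z') (at p)"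
  shows "((\<lambda>q. Y q \<bullet> (M q *v Z q)) has_derivative
     (\<lambda>v. Y' v \<bullet> (M p *v Z p) + Y p \<bullet> (M' v *v Z p) + Y p \<bullet> (M p *v Z' v))) (at p)"
proof -
  have "((\<lambda>q. M q *v Z q) has_derivative (\<lambda>v. M p *v Z' v + M' v *v Z p)) (at p)"
    by (rule bounded_bilinear.FDERIV[OF bb_mv M Z])
  from has_derivative_inner[OF Y this] show ?thesis
    by (rule has_derivative_eq_rhs) (simp add: fun_eq_iff inner_add_right)
qed
lemma sym_dot:
  fixes G :: "real^'n^'n"
  assumes "transpose G = G"
  shows "x \<bullet> (G *v y) = y \<bullet> (G *v x)"
proof -
  have G: "G $ i $ j = G $ j $ i" for i j
    using assms by (metis transpose_def vec_lambda_beta)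
  have "x \<bullet> (G *v y) = (\<Sum>i\<in>UNIV. \<Sum>j\<in>UNIV. x$i * G$i$j * y$j)"
    by (simp add: inner_vec_def matrix_vector_mult_def sum_distrib_left mult_ac)
  also have "\<dots> = (\<Sum>j\<in>UNIV. \<Sum>i\<in>UNIV. x$i * G$i$j * y$j)" by (rule sum.swap)
  also have "\<dots> = (\<Sum>j\<in>UNIV. \<Sum>i\<in>UNIV. y$j * G$j$i * x$i)"
    by (intro sum.cong refl) (metis G mult.commute mult.assoc)
  also have "\<dots> = y \<bullet> (G *v x)"
    by (simp add: inner_vec_def matrix_vector_mult_def sum_distrib_left mult_ac)
  finally show ?thesis .
qed

lemma pd_inv:
  fixes G :: "real^'n^'n"
  assumes pd: "\<forall>v. v \<noteq> 0 \<longrightarrow> v \<bullet> (G *v v) > 0"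
  shows "G *v (matrix_inv G *v w) = w"
proof -
  have "\<forall>x. G *v x = 0 \<longrightarrow> x = 0"
    using pd by (metis inner_zero_right less_irrefl)
  then have "invertible G"
    using matrix_left_invertible_ker invertible_left_inverse by blast
  then have "G ** matrix_inv G = mat 1"
    unfolding invertible_def matrix_inv_def by (rule someI_ex[where P="\<lambda>A'. G ** A' = mat 1 \<and> A' ** G = mat 1", THEN conjunct1])
  then show ?thesis by (simp add: matrix_vector_mul_assoc)
qed

lemma frame_zero:
  fixes G :: "real^'n^'n" and E :: "'n \<Rightarrow> real^'n"
  assumes on: "\<And>i j. E i \<bullet> (G *v E j) = (if i = j then 1 else 0)"
    and x: "\<And>j. E j \<bullet> x = 0"
  shows "x = 0"
proof -
  define T where "T c = (\<Sum>j\<in>UNIV. (c $ j) *\<^sub>R E j)" for c :: "real^'n"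
  have lin: "linear T"
    by (rule linearI) (simp_all add: T_def scaleR_add_left sum.distrib scaleR_sum_right)
  have coef: "T c \<bullet> (G *v E k) = c $ k" for c k
  proof -
    have "T c \<bullet> (G *v E k) = (\<Sum>j\<in>UNIV. c $ j * (E j \<bullet> (G *v E k)))"
      by (simp add: T_def inner_sum_left)
    also have "\<dots> = (\<Sum>j\<in>UNIV. if j = k then c $ j else 0)"
      by (intro sum.cong refl) (simp add: on)
    also have "\<dots> = c $ k" by simp
    finally show ?thesis .
  qed
  have "inj T"
  proof (rule injI)
    fix c d assume "T c = T d"
    then show "c = d" using coef by (metis vec_eq_iff)
  qed
  then have "surj T" using lin eucl.linear_injective_imp_surjective by blast
  then obtain c where c: "x = T c" by (metis surjD)
  have "x \<bullet> x = (\<Sum>j\<in>UNIV. c $ j * (E j \<bullet> x))"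
    by (simp add: c T_def inner_sum_left)
  also have "\<dots> = 0" by (simp add: x)
  finally show ?thesis by simp
qed
lemma lin_expand:
  fixes \<phi> :: "real^'n \<Rightarrow> real"
  assumes "linear \<phi>"
  shows "(\<Sum>l\<in>UNIV. z $ l * \<phi> (axis l 1)) = \<phi> z"
proof -
  have "\<phi> z = \<phi> (\<Sum>l\<in>UNIV. z $ l *\<^sub>R axis l 1)"
    using basis_expansion[of z] by (simp add: scalar_mult_eq_scaleR)
  also have "\<dots> = (\<Sum>l\<in>UNIV. z $ l * \<phi> (axis l 1))"
    by (simp add: linear_sum[OF assms] linear_scale[OF assms])
  finally show ?thesis by simp
qed

lemma mv_scaleR_left: "((c::real) *\<^sub>R (M::real^'n^'m)) *v v = c *\<^sub>R (M *v v)"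
  by (simp add: vec_eq_iff matrix_vector_mult_def sum_distrib_left algebra_simps)

lemma chris_compat:
  fixes g :: "real^'n \<Rightarrow> real^'n^'n"
  assumes sym: "transpose (g p) = g p" and pd: "\<forall>v. v \<noteq> 0 \<longrightarrow> v \<bullet> (g p *v v) > 0"
    and lin: "linear (frechet_derivative g (at p))"
    and Lsym: "\<And>u y z. y \<bullet> (frechet_derivative g (at p) u *v z) = z \<bullet> (frechet_derivative g (at p) u *v y)"
  shows "christoffel g p u y \<bullet> (g p *v z) + y \<bullet> (g p *v christoffel g p u z)
       = y \<bullet> (frechet_derivative g (at p) u *v z)"
proof -
  define L where "L = frechet_derivative g (at p)"
  define G where "G = g p"
  define w where "w u v = (\<chi> l. v \<bullet> (L u *v axis l 1) + u \<bullet> (L v *v axis l 1) - u \<bullet> (L (axis l 1) *v v))" for u v :: "real^'n"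
  have linL: "linear L" using lin by (simp add: L_def)
  have key: "w u v \<bullet> z = v \<bullet> (L u *v z) + u \<bullet> (L v *v z) - u \<bullet> (L z *v v)" for u v z
  proof -
    define \<phi> where "\<phi> x = v \<bullet> (L u *v x) + u \<bullet> (L v *v x) - u \<bullet> (L x *v v)" for x
    have "linear \<phi>"
      by (rule linearI)
         (simp_all add: \<phi>_def linear_add[OF linL] linear_scale[OF linL] matrix_vector_mult_add_rdistrib
            mv_scaleR_left vec.add matrix_vector_mult_scaleR inner_add_right algebra_simps)
    then have "(\<Sum>l\<in>UNIV. z $ l * \<phi> (axis l 1)) = \<phi> z" by (rule lin_expand)
    moreover have "w u v \<bullet> z = (\<Sum>l\<in>UNIV. z $ l * \<phi> (axis l 1))"
      by (simp add: w_def \<phi>_def inner_vec_def mult.commute)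
    ultimately show ?thesis by (simp add: \<phi>_def)
  qed
  have ch: "christoffel g p u v = (1/2) *\<^sub>R (matrix_inv G *v w u v)" for u v
    by (simp add: christoffel_def G_def w_def L_def)
  have Ginv: "G *v (matrix_inv G *v x) = x" for x using pd_inv[OF pd] by (simp add: G_def)
  have symG: "transpose G = G" using sym by (simp add: G_def)
  have 1: "christoffel g p u y \<bullet> (G *v z) = (1/2) * (w u y \<bullet> z)"
    unfolding ch inner_scaleR_left
    by (subst sym_dot[OF symG]) (simp add: Ginv inner_commute)
  have 2: "y \<bullet> (G *v christoffel g p u z) = (1/2) * (w u z \<bullet> y)"
    unfolding ch matrix_vector_mult_scaleR inner_scaleR_right by (simp add: Ginv inner_commute)
  have 3: "z \<bullet> (L u *v y) = y \<bullet> (L u *v z)" using Lsym by (simp add: L_def)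
  show ?thesis
    unfolding G_def[symmetric] L_def[symmetric] 1 2 key 3 by (simp add: algebra_simps)
qed
lemma smooth_deriv:
  assumes "smooth_on D f" "open D" "p \<in> D"
  shows "(f has_derivative frechet_derivative f (at p)) (at p)"
proof -
  have "dder [] f differentiable_on D" using assms(1) unfolding smooth_on_def by blast
  then have "f differentiable at p" using assms(2,3) differentiable_on_eq_differentiable_at by auto
  then show ?thesis using frechet_derivative_works by blast
qed

lemma const_deriv:
  assumes "(f has_derivative f') (at p)" "open D" "p \<in> D" "\<And>q. q \<in> D \<Longrightarrow> f q = c"
  shows "f' v = 0"
proof -
  have "((\<lambda>_. c) has_derivative (\<lambda>_. 0)) (at p)" by simp
  then have "(f has_derivative (\<lambda>_. 0)) (at p)"
    by (rule has_derivative_transform_within_open[OF _ assms(2,3)]) (simp add: assms(4))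
  with assms(1) have "f' = (\<lambda>_. 0)" by (rule has_derivative_unique)
  then show ?thesis by simp
qed

lemma deriv_transfer:
  assumes "(f has_derivative f') (at p)" "open D" "p \<in> D" "\<And>q. q \<in> D \<Longrightarrow> f q = h q"
  shows "(h has_derivative f') (at p)" "frechet_derivative h (at p) = f'"
proof -
  show h: "(h has_derivative f') (at p)"
    by (rule has_derivative_transform_within_open[OF assms(1) assms(2,3)]) (simp add: assms(4))
  show "frechet_derivative h (at p) = f'" using frechet_derivative_at[OF h] by simp
qed
theorem lemma4p3:
  fixes D :: "(real^'n) set"
    and g :: "real^'n \<Rightarrow> real^'n^'n"
    and e :: "'n \<Rightarrow> real^'n \<Rightarrow> real^'n"
    and a :: "real^'n \<Rightarrow> real^'n^'n"
    and lam :: "'n \<Rightarrow> real^'n \<Rightarrow> real"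
  assumes "open D"
    and "riemannian_metric D g"
    and "\<And>i. smooth_on D (e i)"
    and "\<And>i j p. p \<in> D \<Longrightarrow> ginner g p (e i p) (e j p) = (if i = j then 1 else 0)"
    and "smooth_on D a"
    and "\<And>p. p \<in> D \<Longrightarrow> transpose (a p) = a p"
    and "codazzi D g a"
    and "\<And>i j p. p \<in> D \<Longrightarrow> tens a (e i) (e j) p = (if i = j then lam i p else 0)"
    and "\<And>p. p \<in> D \<Longrightarrow> inj (\<lambda>i. lam i p)"
    and "\<And>k. k \<noteq> CARD('n) \<Longrightarrow> \<exists>c. \<forall>p\<in>D. esym k (\<lambda>i. lam i p) = c"
  shows "(\<forall>p\<in>D. \<forall>i k. i \<noteq> k \<longrightarrow>
           ginner g p (cov g (e i) (e i) p) (e k p)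
           = (-1) ^ (CARD('n) + 1)
               / ((lam i p - lam k p) * poly (pderiv (charpoly (\<lambda>j. lam j p))) (lam i p))
             * frechet_derivative (\<lambda>q. esym CARD('n) (\<lambda>j. lam j q)) (at p) (e k p))
     \<and> (\<forall>p\<in>D.
           ginner g p (\<Sum>i\<in>UNIV. cov g (e i) (e i) p)
             (\<Sum>k\<in>UNIV. frechet_derivative (\<lambda>q. esym CARD('n) (\<lambda>j. lam j q)) (at p) (e k p) *\<^sub>R e k p)
           = (\<Sum>k\<in>UNIV. (-1) ^ (CARD('n) + 1)
                 * poly (pderiv (pderiv (charpoly (\<lambda>j. lam j p)))) (lam k p)
                 / (2 * (poly (pderiv (charpoly (\<lambda>j. lam j p))) (lam k p))^2)
                 * (frechet_derivative (\<lambda>q. esym CARD('n) (\<lambda>j. lam j q)) (at p) (e k p))^2))"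
proof -
  note oD = assms(1)
  have smg: "smooth_on D g" and gsym: "\<And>q. q \<in> D \<Longrightarrow> transpose (g q) = g q"
    and gpd: "\<And>q. q \<in> D \<Longrightarrow> \<forall>v. v \<noteq> 0 \<longrightarrow> v \<bullet> (g q *v v) > 0"
    using assms(2) unfolding riemannian_metric_def by auto
  define n where "n = CARD('n)"
  define \<sigma> where "\<sigma> q = esym n (\<lambda>j. lam j q)" for q
  obtain c where c: "\<And>k q. k \<noteq> n \<Longrightarrow> q \<in> D \<Longrightarrow> esym k (\<lambda>j. lam j q) = c k"
    using assms(10) unfolding n_def by metis
  have main: "(\<forall>i k. i \<noteq> k \<longrightarrow>
           ginner g p (cov g (e i) (e i) p) (e k p)
           = (-1) ^ (n + 1) / ((lam i p - lam k p) * poly (pderiv (charpoly (\<lambda>j. lam j p))) (lam i p))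
             * frechet_derivative \<sigma> (at p) (e k p))
     \<and> ginner g p (\<Sum>i\<in>UNIV. cov g (e i) (e i) p)
             (\<Sum>k\<in>UNIV. frechet_derivative \<sigma> (at p) (e k p) *\<^sub>R e k p)
           = (\<Sum>k\<in>UNIV. (-1) ^ (n + 1)
                 * poly (pderiv (pderiv (charpoly (\<lambda>j. lam j p)))) (lam k p)
                 / (2 * (poly (pderiv (charpoly (\<lambda>j. lam j p))) (lam k p))^2)
                 * (frechet_derivative \<sigma> (at p) (e k p))^2)" if pD: "p \<in> D" for p
  proof -
    define G where "G = g p"
    define A where "A = a p"
    define E where "E i = e i p" for i
    define de where "de i = frechet_derivative (e i) (at p)" for i
    define dg where "dg = frechet_derivative g (at p)"
    define da where "da = frechet_derivative a (at p)"
    have HE: "(e i has_derivative de i) (at p)" for i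
      unfolding de_def by (rule smooth_deriv[OF assms(3) oD pD])
    have HG: "(g has_derivative dg) (at p)" unfolding dg_def by (rule smooth_deriv[OF smg oD pD])
    have HA: "(a has_derivative da) (at p)" unfolding da_def by (rule smooth_deriv[OF assms(5) oD pD])
    have symG: "transpose G = G" using gsym[OF pD] by (simp add: G_def)
    have pdG: "\<forall>v. v \<noteq> 0 \<longrightarrow> v \<bullet> (G *v v) > 0" using gpd[OF pD] by (simp add: G_def)
    have symA: "transpose A = A" using assms(6)[OF pD] by (simp add: A_def)
    have on: "E i \<bullet> (G *v E j) = (if i = j then 1 else 0)" for i j
      using assms(4)[OF pD, of i j] by (simp add: ginner_def E_def G_def)
    have gin: "ginner g p x y = x \<bullet> (G *v y)" for x y by (simp add: ginner_def G_def)
    have ginsym: "ginner g p x y = ginner g p y x" for x y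
      unfolding gin by (rule sym_dot[OF symG])
    have Lsym: "y \<bullet> (dg u *v z) = z \<bullet> (dg u *v y)" for u y z
    proof -
      have d1: "((\<lambda>q. y \<bullet> (g q *v z)) has_derivative (\<lambda>v. 0 \<bullet> (G *v z) + y \<bullet> (dg v *v z) + y \<bullet> (G *v 0))) (at p)"
        using deriv_form[OF has_derivative_const HG has_derivative_const] by (simp add: G_def)
      have d2: "((\<lambda>q. z \<bullet> (g q *v y)) has_derivative (\<lambda>v. 0 \<bullet> (G *v y) + z \<bullet> (dg v *v y) + z \<bullet> (G *v 0))) (at p)"
        using deriv_form[OF has_derivative_const HG has_derivative_const] by (simp add: G_def)
      have "(\<lambda>v. 0 \<bullet> (G *v z) + y \<bullet> (dg v *v z) + y \<bullet> (G *v 0) - (0 \<bullet> (G *v y) + z \<bullet> (dg v *v y) + z \<bullet> (G *v 0))) u = 0"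
        by (rule const_deriv[OF has_derivative_diff[OF d1 d2] oD pD, of 0])
           (simp add: sym_dot[OF gsym])
      then show ?thesis by simp
    qed
    have linL: "linear dg" using HG by (rule has_derivative_linear)
    have chr: "christoffel g p u y \<bullet> (G *v z) + y \<bullet> (G *v christoffel g p u z) = y \<bullet> (dg u *v z)" for u y z
      unfolding G_def dg_def
      by (rule chris_compat) (use gsym[OF pD] gpd[OF pD] linL Lsym in \<open>simp_all add: dg_def\<close>)
    have comp: "ginner g p (cov g X (e i) p) (E j) + ginner g p (E i) (cov g X (e j) p) = 0" for X i j
    proof -
      have d: "((\<lambda>q. e i q \<bullet> (g q *v e j q)) has_derivative
          (\<lambda>v. de i v \<bullet> (G *v E j) + E i \<bullet> (dg v *v E j) + E i \<bullet> (G *v de j v))) (at p)"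
        using deriv_form[OF HE HG HE] by (simp add: G_def E_def)
      have "(\<lambda>v. de i v \<bullet> (G *v E j) + E i \<bullet> (dg v *v E j) + E i \<bullet> (G *v de j v)) (X p) = 0"
        by (rule const_deriv[OF d oD pD, of "if i = j then 1 else 0"])
           (use assms(4) in \<open>simp add: ginner_def\<close>)
      moreover have "cov g X (e i) p = de i (X p) + christoffel g p (X p) (E i)" for i
        by (simp add: cov_def de_def E_def)
      ultimately show ?thesis
        using chr[of "X p" "E i" "E j"]
        by (simp add: gin inner_add_left inner_add_right vec.add algebra_simps)
    qed
    have Gam0: "ginner g p (cov g X (e i) p) (E i) = 0" for X i
      using comp[of X i i] ginsym by simp
    have Aeig: "A *v E i = lam i p *\<^sub>R (G *v E i)" for i
    proof -
      have "A *v E i - lam i p *\<^sub>R (G *v E i) = 0"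
      proof (rule frame_zero[of E G])
        show "E i' \<bullet> (G *v E j) = (if i' = j then 1 else 0)" for i' j by (rule on)
        fix j
        have "E j \<bullet> (A *v E i) = (if j = i then lam j p else 0)"
          using assms(8)[OF pD, of j i] by (simp add: tens_def E_def A_def)
        then show "E j \<bullet> (A *v E i - lam i p *\<^sub>R (G *v E i)) = 0"
          by (simp add: inner_diff_right on)
      qed
      then show ?thesis by simp
    qed
    have tA1: "V \<bullet> (A *v E i) = lam i p * ginner g p V (E i)" for V i
      by (simp add: Aeig gin)
    have tA2: "E k \<bullet> (A *v V) = lam k p * ginner g p (E k) V" for V k
    proof -
      have "E k \<bullet> (A *v V) = V \<bullet> (A *v E k)" by (rule sym_dot[OF symA])
      also have "\<dots> = lam k p * ginner g p V (E k)" by (rule tA1)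
      finally show ?thesis using ginsym by simp
    qed
    have tensp: "tens a Y Z p = Y p \<bullet> (A *v Z p)" for Y Z by (simp add: tens_def A_def)
    define dl where "dl i = frechet_derivative (lam i) (at p)" for i
    have Tder: "(tens a (e i) (e j) has_derivative
        (\<lambda>v. de i v \<bullet> (A *v E j) + E i \<bullet> (da v *v E j) + E i \<bullet> (A *v de j v))) (at p)" for i j
      using deriv_form[OF HE HA HE] by (simp add: tens_def[abs_def] A_def E_def)
    have Hl: "(lam i has_derivative dl i) (at p)"
     and dlT: "dl i = (\<lambda>v. de i v \<bullet> (A *v E i) + E i \<bullet> (da v *v E i) + E i \<bullet> (A *v de i v))" for i
      using deriv_transfer[OF Tder[of i i] oD pD, of "lam i"] assms(8) by (auto simp: dl_def)
    have Tdi: "frechet_derivative (tens a (e i) (e i)) (at p) = dl i" for i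
      using frechet_derivative_at[OF Tder[of i i]] dlT[of i] by simp
    have Tdik: "frechet_derivative (tens a (e k) (e i)) (at p) v = 0" if "k \<noteq> i" for k i v
    proof -
      have z: "(\<lambda>v. de k v \<bullet> (A *v E i) + E k \<bullet> (da v *v E i) + E k \<bullet> (A *v de i v)) v = 0"
        by (rule const_deriv[OF Tder[of k i] oD pD, of 0]) (use assms(8) that in auto)
      show ?thesis using frechet_derivative_at[OF Tder[of k i], symmetric] z by simp
    qed
    have cod: "dl i (E k) = (lam i p - lam k p) * ginner g p (cov g (e i) (e i) p) (E k)" if "i \<noteq> k" for i k
    proof -
      have "cov_tens g a (e k) (e i) (e i) p = cov_tens g a (e i) (e k) (e i) p"
        using assms(7) assms(3) pD unfolding codazzi_def by blast
      then have eq: "dl i (E k) - tens a (cov g (e k) (e i)) (e i) p - tens a (e i) (cov g (e k) (e i)) p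
          = 0 - tens a (cov g (e i) (e k)) (e i) p - tens a (e k) (cov g (e i) (e i)) p"
        unfolding cov_tens_def Tdi Tdik[OF that[symmetric]] by (simp add: E_def)
      have "tens a (cov g (e k) (e i)) (e i) p = 0"
        unfolding tensp E_def[symmetric] tA1 Gam0 by simp
      moreover have "tens a (e i) (cov g (e k) (e i)) p = 0"
        unfolding tensp E_def[symmetric] tA2 using Gam0 ginsym by simp
      moreover have "tens a (cov g (e i) (e k)) (e i) p = - lam i p * ginner g p (E k) (cov g (e i) (e i) p)"
      proof -
        have "ginner g p (cov g (e i) (e k) p) (E i) = - ginner g p (E k) (cov g (e i) (e i) p)"
          using comp[of "e i" k i] by linarith
        then show ?thesis unfolding tensp E_def[symmetric] tA1 by simp
      qed
      moreover have "tens a (e k) (cov g (e i) (e i)) p = lam k p * ginner g p (E k) (cov g (e i) (e i) p)"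
        unfolding tensp E_def[symmetric] tA2 by simp
      ultimately show ?thesis using eq ginsym[of "E k"] by (simp add: algebra_simps)
    qed
    have Hs: "(\<sigma> has_derivative (\<lambda>v. (-1)^n * (\<Sum>j\<in>UNIV. - dl j v * (\<Prod>l\<in>UNIV-{j}. x - lam l p)))) (at p)" for x
    proof -
      define K where "K = (\<Sum>k<n. (-1)^k * c k * x^(n-k))"
      have HF: "((\<lambda>q. \<Prod>j\<in>UNIV. x - lam j q) has_derivative
          (\<lambda>v. \<Sum>j\<in>UNIV. - dl j v * (\<Prod>l\<in>UNIV-{j}. x - lam l p))) (at p)"
        using has_derivative_prod[of UNIV "\<lambda>j q. x - lam j q" "\<lambda>j v. 0 - dl j v" p UNIV]
          has_derivative_diff[OF has_derivative_const Hl] by simp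
      have "((\<lambda>q. (\<Prod>j\<in>UNIV. x - lam j q) - K) has_derivative
          (\<lambda>v. (\<Sum>j\<in>UNIV. - dl j v * (\<Prod>l\<in>UNIV-{j}. x - lam l p)) - 0)) (at p)"
        by (rule has_derivative_diff[OF HF has_derivative_const])
      then have H2: "((\<lambda>q. (-1)^n * ((\<Prod>j\<in>UNIV. x - lam j q) - K)) has_derivative
          (\<lambda>v. (-1)^n * ((\<Sum>j\<in>UNIV. - dl j v * (\<Prod>l\<in>UNIV-{j}. x - lam l p)) - 0))) (at p)"
        by (rule has_derivative_mult_right)
      have eqD: "(-1)^n * ((\<Prod>j\<in>UNIV. x - lam j q) - K) = \<sigma> q" if qD: "q \<in> D" for q
      proof -
        have "(\<Prod>j\<in>UNIV. x - lam j q) = (\<Sum>k\<le>n. (-1)^k * esym k (\<lambda>j. lam j q) * x^(n-k))"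
          using vieta[of x "\<lambda>j. lam j q"] by (simp add: n_def)
        also have "\<dots> = (\<Sum>k<n. (-1)^k * esym k (\<lambda>j. lam j q) * x^(n-k)) + (-1)^n * \<sigma> q"
          by (simp add: lessThan_Suc_atMost[symmetric] \<sigma>_def)
        also have "(\<Sum>k<n. (-1)^k * esym k (\<lambda>j. lam j q) * x^(n-k)) = K"
          unfolding K_def by (rule sum.cong[OF refl]) (simp add: c[OF _ qD])
        finally have "(\<Prod>j\<in>UNIV. x - lam j q) - K = (-1)^n * \<sigma> q" by simp
        moreover have "(-1::real)^n * (-1)^n = 1" by (induct n) auto
        ultimately show ?thesis by (metis mult.assoc mult_1)
      qed
      show ?thesis
        using deriv_transfer(1)[OF H2 oD pD eqD] by simp
    qed
    define ds where "ds = frechet_derivative \<sigma> (at p)"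
    define P' where "P' i = poly (pderiv (charpoly (\<lambda>j. lam j p))) (lam i p)" for i
    have injl: "inj (\<lambda>i. lam i p)" by (rule assms(9)[OF pD])
    have P'eq: "P' i = (\<Prod>l\<in>UNIV-{i}. lam i p - lam l p)" for i
      unfolding P'_def using pderiv_charpoly_at[of "\<lambda>j. lam j p" i] by simp
    have P'nz: "P' i \<noteq> 0" for i
      unfolding P'eq using injl by (auto simp: prod_zero_iff inj_def)
    have dsrel: "dl i v * P' i = (-1)^(n+1) * ds v" for i v
    proof -
      have "ds v = (-1)^n * (\<Sum>j\<in>UNIV. - dl j v * (\<Prod>l\<in>UNIV-{j}. lam i p - lam l p))"
        using frechet_derivative_at[OF Hs[of "lam i p"], symmetric] by (simp add: ds_def)
      also have "(\<Sum>j\<in>UNIV. - dl j v * (\<Prod>l\<in>UNIV-{j}. lam i p - lam l p)) = - dl i v * P' i"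
      proof -
        have "(\<Sum>j\<in>UNIV-{i}. - dl j v * (\<Prod>l\<in>UNIV-{j}. lam i p - lam l p)) = 0"
          by (rule sum.neutral) (auto intro!: prod_zero)
        then show ?thesis by (simp add: sum.remove[of UNIV i] P'eq)
      qed
      finally have "ds v = - ((-1)^n * (dl i v * P' i))" by simp
      moreover have "(-1::real)^n * (-1)^n = 1" by (induct n) auto
      ultimately show ?thesis by (simp add: algebra_simps)
    qed
    have part1: "ginner g p (cov g (e i) (e i) p) (E k)
        = (-1) ^ (n + 1) / ((lam i p - lam k p) * P' i) * ds (E k)" if "i \<noteq> k" for i k
    proof -
      have ne: "lam i p - lam k p \<noteq> 0" using injl that by (auto simp: inj_def)
      have "ginner g p (cov g (e i) (e i) p) (E k) = dl i (E k) / (lam i p - lam k p)"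
        using cod[OF that] ne by simp
      also have "dl i (E k) = (-1)^(n+1) * ds (E k) / P' i"
        using dsrel[of i "E k"] P'nz[of i] by (simp add: field_simps)
      finally show ?thesis using ne P'nz[of i] by simp
    qed
    have part2: "ginner g p (\<Sum>i\<in>UNIV. cov g (e i) (e i) p) (\<Sum>k\<in>UNIV. ds (E k) *\<^sub>R E k)
        = (\<Sum>k\<in>UNIV. (-1) ^ (n + 1) * poly (pderiv (pderiv (charpoly (\<lambda>j. lam j p)))) (lam k p)
                 / (2 * (P' k)^2) * (ds (E k))^2)"
    proof -
      have "ginner g p (\<Sum>i\<in>UNIV. cov g (e i) (e i) p) (\<Sum>k\<in>UNIV. ds (E k) *\<^sub>R E k)
          = (\<Sum>k\<in>UNIV. ds (E k) * (\<Sum>i\<in>UNIV. ginner g p (cov g (e i) (e i) p) (E k)))"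
        by (simp add: gin inner_sum_left inner_sum_right matrix_vector_mult_scaleR
             linear_sum[OF matrix_vector_mul_linear] o_def)
      also have "\<dots> = (\<Sum>k\<in>UNIV. (-1) ^ (n + 1) * poly (pderiv (pderiv (charpoly (\<lambda>j. lam j p)))) (lam k p)
                 / (2 * (P' k)^2) * (ds (E k))^2)"
      proof (rule sum.cong[OF refl])
        fix k
        have "(\<Sum>i\<in>UNIV. ginner g p (cov g (e i) (e i) p) (E k))
            = (\<Sum>i\<in>UNIV-{k}. ginner g p (cov g (e i) (e i) p) (E k))"
          using Gam0[of "e k" k] by (simp add: sum.remove[of UNIV k])
        also have "\<dots> = (\<Sum>i\<in>UNIV-{k}. (-1) ^ (n + 1) * ds (E k) * (1 / ((lam i p - lam k p) * P' i)))"
          by (rule sum.cong[OF refl]) (simp add: part1)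
        also have "\<dots> = (-1) ^ (n + 1) * ds (E k) * (\<Sum>i\<in>UNIV-{k}. 1 / ((lam i p - lam k p) * P' i))"
          by (simp add: sum_distrib_left)
        also have "(\<Sum>i\<in>UNIV-{k}. 1 / ((lam i p - lam k p) * P' i))
            = poly (pderiv (pderiv (charpoly (\<lambda>j. lam j p)))) (lam k p) / (2 * (P' k)^2)"
          using pf_charpoly[OF injl, of k] by (simp add: P'_def)
        finally show "ds (E k) * (\<Sum>i\<in>UNIV. ginner g p (cov g (e i) (e i) p) (E k))
            = (-1) ^ (n + 1) * poly (pderiv (pderiv (charpoly (\<lambda>j. lam j p)))) (lam k p)
                 / (2 * (P' k)^2) * (ds (E k))^2"
          by (simp add: power2_eq_square)
      qed
      finally show ?thesis .
    qed
    show ?thesis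
      using part1 part2 by (simp add: E_def ds_def P'_def)
  qed
  show ?thesis using main unfolding n_def \<sigma>_def by blast
qed

end
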